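(* Let $\omega\in S_n$. The poset $M_\omega$ contains a $B_2$-pattern (i.e., four distinct elements whose induced subposet is isomorphic to $B_2$) if and only if $M_\omega$ contains a parallelogram-pattern poset.
   Context: Permutations $\omega\in S_n$ are written in one-line notation. Let ${\rm Inv}(\omega)=\{(i,j): 1\le i<j\le n,\ \omega(i)>\omega(j)\}$, $c_i(\omega)=\#\{j: i<j\le n,\ \omega(i)>\omega(j)\}$, and for $i<j$, $c_{i,j}(\omega)=\#\{k: i<k<j,\ \omega(i)>\omega(k)\}$; $[m]=\{1,\dots,m\}$. For $i$ with $c_i(\omega)>0$ and $x\in[c_i(\omega)]$, $m_{i,x}(\omega)\in\mathbb{N}^n$ has $j$-th coordinate $0$ if $j<i$; $x$ if $j=i$; $0$ if $j>i$ and $(i,j)\in{\rm Inv}(\omega)$; $\max\{0,x-c_{i,j}(\omega)\}$ if $j>i$ and $(i,j)\notin{\rm Inv}(\omega)$. $M_\omega$ is the set of all such $m_{i,x}(\omega)$, ordered by the product order on $\mathbb{N}^n$. $B_2$ is the Boolean lattice of rank 2 (a minimum, a maximum, and two incomparable elements between them). For $1\le i<j\le n$, $b<a$ in $[c_i(\omega)]$ and $c<d$ in $[c_j(\omega)]$ with $a+c=b+d$, the set $\{m_{i,a}(\omega),m_{i,b}(\omega),m_{j,c}(\omega),m_{j,d}(\omega)\}$ is a parallelogram-pattern poset if $m_{i,a}(\omega)>m_{j,d}(\omega)$, $m_{i,b}(\omega)>m_{j,c}(\omega)$, and $m_{i,b}(\omega)$, $m_{j,d}(\omega)$ are incomparable.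 *)

theory Defs
  imports "HOL-Combinatorics.Permutations"
begin

text \<open>A permutation of S_n is a function w :: nat => nat with w permutes {1..n}
  (one-line notation w(1) ... w(n)). Vectors in N^n are functions nat => nat whose
  coordinates are indexed by {1..n} and are 0 outside; the product order on N^n is
  then the pointwise order on functions.\<close>

definition Inv :: "nat \<Rightarrow> (nat \<Rightarrow> nat) \<Rightarrow> (nat \<times> nat) set" where
  "Inv n w = {(i, j). 1 \<le> i \<and> i < j \<and> j \<le> n \<and> w i > w j}"

definition cc :: "nat \<Rightarrow> (nat \<Rightarrow> nat) \<Rightarrow> nat \<Rightarrow> nat" where
  "cc n w i = card {j. i < j \<and> j \<le> n \<and> w i > w j}"

definition cij :: "(nat \<Rightarrow> nat) \<Rightarrow> nat \<Rightarrow> nat \<Rightarrow> nat" where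
  "cij w i j = card {k. i < k \<and> k < j \<and> w i > w k}"

definition mvec :: "nat \<Rightarrow> (nat \<Rightarrow> nat) \<Rightarrow> nat \<Rightarrow> nat \<Rightarrow> (nat \<Rightarrow> nat)" where
  "mvec n w i x = (\<lambda>j. if j < 1 \<or> j > n then 0
      else if j < i then 0
      else if j = i then x
      else if (i, j) \<in> Inv n w then 0
      else max 0 (x - cij w i j))"

definition Mset :: "nat \<Rightarrow> (nat \<Rightarrow> nat) \<Rightarrow> (nat \<Rightarrow> nat) set" where
  "Mset n w = {mvec n w i x | i x. 1 \<le> i \<and> i \<le> n \<and> cc n w i > 0 \<and> x \<in> {1..cc n w i}}"

definition b2_le :: "bool \<times> bool \<Rightarrow> bool \<times> bool \<Rightarrow> bool" where
  "b2_le p q = ((fst p \<longrightarrow> fst q) \<and> (snd p \<longrightarrow> snd q))"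

definition has_B2_pattern :: "(nat \<Rightarrow> nat) set \<Rightarrow> bool" where
  "has_B2_pattern P = (\<exists>f :: bool \<times> bool \<Rightarrow> (nat \<Rightarrow> nat).
      inj f \<and> range f \<subseteq> P \<and> (\<forall>p q. f p \<le> f q \<longleftrightarrow> b2_le p q))"

definition has_parallelogram_pattern :: "nat \<Rightarrow> (nat \<Rightarrow> nat) \<Rightarrow> bool" where
  "has_parallelogram_pattern n w = (\<exists>i j a b c d.
      1 \<le> i \<and> i < j \<and> j \<le> n \<and>
      b \<in> {1..cc n w i} \<and> a \<in> {1..cc n w i} \<and> b < a \<and>
      c \<in> {1..cc n w j} \<and> d \<in> {1..cc n w j} \<and> c < d \<and>
      a + c = b + d \<and>
      mvec n w i a > mvec n w j d \<and> mvec n w i b > mvec n w j c \<and>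
      \<not> mvec n w i b \<le> mvec n w j d \<and> \<not> mvec n w j d \<le> mvec n w i b)"

end

theory Submission
  imports Defs
begin

lemma mv_i: "1 \<le> i \<Longrightarrow> i \<le> n \<Longrightarrow> mvec n w i x i = x"
  by (simp add: mvec_def)

lemma mv_lt: "k < i \<Longrightarrow> mvec n w i x k = 0"
  by (simp add: mvec_def)

lemma mv_minus1: "mvec n w i (x - 1) k = mvec n w i x k - 1"
  by (simp add: mvec_def)

lemma mv_le_x: "mvec n w i x k \<le> x"
  by (simp add: mvec_def)

lemma mv_mono: "x \<le> y \<Longrightarrow> mvec n w i x \<le> mvec n w i y"
  by (auto simp add: mvec_def le_fun_def)

lemma mv_F4: "1 \<le> i \<Longrightarrow> i < j \<Longrightarrow> j \<le> n \<Longrightarrow> 1 \<le> x \<Longrightarrow> \<not> mvec n w i x \<le> mvec n w j y"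
proof
  assume "1 \<le> i" "i < j" "j \<le> n" "1 \<le> x" "mvec n w i x \<le> mvec n w j y"
  then have "mvec n w i x i \<le> mvec n w j y i" by (simp add: le_fun_def)
  with \<open>1 \<le> i\<close> \<open>i < j\<close> \<open>j \<le> n\<close> \<open>1 \<le> x\<close> show False
    by (simp add: mv_i mv_lt)
qed

lemma mv_idx: "mvec n w j y \<le> mvec n w i x \<Longrightarrow> 1 \<le> j \<Longrightarrow> i \<le> n \<Longrightarrow> 1 \<le> y \<Longrightarrow> i \<le> j"
  using mv_F4[of j i n y w x] by force

lemma mv_same: "mvec n w i x \<le> mvec n w i y \<Longrightarrow> 1 \<le> i \<Longrightarrow> i \<le> n \<Longrightarrow> x \<le> y"
  by (metis le_fun_def mv_i)

lemma mv_coord: "1 \<le> i \<Longrightarrow> i < l \<Longrightarrow> l \<le> n \<Longrightarrow>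
   mvec n w i x l = (if w i > w l then 0 else x - cij w i l)"
  by (simp add: mvec_def Inv_def)

lemma mv_zero: "mvec n w i 0 = (\<lambda>_. 0)"
  by (simp add: mvec_def fun_eq_iff)

lemma cij0: "cij w i l = 0 \<longleftrightarrow> (\<forall>k. i < k \<and> k < l \<longrightarrow> \<not> w i > w k)"
proof -
  have "finite {k. i < k \<and> k < l \<and> w i > w k}" by (rule finite_subset[of _ "{..<l}"]) auto
  then show ?thesis by (auto simp add: cij_def)
qed

lemma cij_eq: "t < i2 \<Longrightarrow> i2 \<le> l \<Longrightarrow> (\<forall>k. i2 \<le> k \<and> k < l \<longrightarrow> \<not> w t > w k) \<Longrightarrow> cij w t l = cij w t i2"
  unfolding cij_def
  by (rule arg_cong[where f=card]) (auto, metis not_less)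

lemma key:
  assumes "1 \<le> i" "i < j" "j \<le> n" "2 \<le> d" "d \<le> cc n w j" "a \<le> cc n w i"
    and le: "mvec n w j d \<le> mvec n w i a"
  shows "has_parallelogram_pattern n w"
proof -
  define a' where "a' = (LEAST x. mvec n w j d \<le> mvec n w i x)"
  have a'1: "mvec n w j d \<le> mvec n w i a'" unfolding a'_def by (rule LeastI[of _ a]) (rule le)
  have a'2: "a' \<le> a" unfolding a'_def by (rule Least_le) (rule le)
  have a'3: "\<not> mvec n w j d \<le> mvec n w i (a' - 1)"
  proof
    assume h: "mvec n w j d \<le> mvec n w i (a' - 1)"
    have "a' \<noteq> 0"
    proof
      assume "a' = 0"
      with a'1 have "mvec n w j d j \<le> 0" by (simp add: le_fun_def mv_zero)
      with assms show False by (simp add: mv_i)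
    qed
    then have "a' - 1 < a'" by simp
    moreover have "a' \<le> a' - 1" unfolding a'_def[symmetric] using h unfolding a'_def by (rule Least_le)
    ultimately show False by simp
  qed
  have a'4: "2 \<le> a'"
  proof (rule ccontr)
    assume "\<not> 2 \<le> a'"
    then have "a' \<le> 1" by simp
    have "mvec n w j d j \<le> mvec n w i a' j" using a'1 by (simp add: le_fun_def)
    also have "\<dots> \<le> a'" by (rule mv_le_x)
    finally show False using assms \<open>a' \<le> 1\<close> by (simp add: mv_i)
  qed
  have c1: "mvec n w j (d - 1) \<le> mvec n w i (a' - 1)"
  proof (rule le_funI)
    fix k
    have "mvec n w j d k \<le> mvec n w i a' k" using a'1 by (simp add: le_fun_def)
    then show "mvec n w j (d - 1) k \<le> mvec n w i (a' - 1) k"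
      unfolding mv_minus1 by (rule diff_le_mono)
  qed
  have "1 \<le> i \<and> i < j \<and> j \<le> n \<and>
      a' - 1 \<in> {1..cc n w i} \<and> a' \<in> {1..cc n w i} \<and> a' - 1 < a' \<and>
      d - 1 \<in> {1..cc n w j} \<and> d \<in> {1..cc n w j} \<and> d - 1 < d \<and>
      a' + (d - 1) = (a' - 1) + d \<and>
      mvec n w i a' > mvec n w j d \<and> mvec n w i (a' - 1) > mvec n w j (d - 1) \<and>
      \<not> mvec n w i (a' - 1) \<le> mvec n w j d \<and> \<not> mvec n w j d \<le> mvec n w i (a' - 1)"
    using assms a'1 a'2 a'3 a'4 c1 mv_F4[of i j n a' w d] mv_F4[of i j n "a' - 1" w "d - 1"]
      mv_F4[of i j n "a' - 1" w d]
    by (auto simp add: less_fun_def)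
  then show ?thesis unfolding has_parallelogram_pattern_def by blast
qed

lemma lemL:
  assumes "1 \<le> t" "t < i2" "i2 < s" "s \<le> n" "w t < w i2"
    and bq: "mvec n w s 1 \<le> mvec n w i2 1" and bp: "mvec n w s 1 \<le> mvec n w t x"
  shows "mvec n w i2 1 \<le> mvec n w t x"
proof -
  have "mvec n w s 1 s \<le> mvec n w i2 1 s" using bq by (simp add: le_fun_def)
  then have "1 \<le> (if w i2 > w s then 0 else 1 - cij w i2 s)"
    using assms mv_i[of s n w 1] mv_coord[of i2 s n w 1] by simp
  then have "\<not> w i2 > w s" "cij w i2 s = 0" by (auto split: if_splits)
  then have hs: "\<forall>k. i2 < k \<and> k < s \<longrightarrow> \<not> w i2 > w k" using cij0 by blast
  have "mvec n w s 1 s \<le> mvec n w t x s" using bp by (simp add: le_fun_def)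
  then have "1 \<le> (if w t > w s then 0 else x - cij w t s)"
    using assms mv_i[of s n w 1] mv_coord[of t s n w x] by simp
  then have px: "1 \<le> x - cij w t s" by (auto split: if_splits)
  have "\<forall>k. i2 \<le> k \<and> k < s \<longrightarrow> \<not> w t > w k"
  proof (intro allI impI)
    fix k assume k: "i2 \<le> k \<and> k < s"
    show "\<not> w t > w k" using hs[rule_format, of k] assms(5) k by (cases "k = i2") auto
  qed
  then have "cij w t s = cij w t i2" using cij_eq[of t i2 s w] assms by simp
  with px have px2: "1 \<le> x - cij w t i2" by simp
  show ?thesis
  proof (rule le_funI)
    fix l
    show "mvec n w i2 1 l \<le> mvec n w t x l"
    proof (cases "l < i2 \<or> l > n")
      case True then show ?thesis by (auto simp add: mvec_def)
    next
      case False
      show ?thesis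
      proof (cases "l = i2")
        case True
        then show ?thesis using assms px2 mv_coord[of t i2 n w x] mv_i[of i2 n w 1] by simp
      next
        case False
        with \<open>\<not> (l < i2 \<or> l > n)\<close> have l: "i2 < l" "l \<le> n" by auto
        have q: "mvec n w i2 1 l = (if w i2 > w l then 0 else 1 - cij w i2 l)"
          using l assms mv_coord[of i2 l n w 1] by simp
        show ?thesis
        proof (cases "w i2 > w l \<or> cij w i2 l \<noteq> 0")
          case True then show ?thesis using q by auto
        next
          case False
          then have nl: "\<not> w i2 > w l" and "cij w i2 l = 0" by auto
          then have hl: "\<forall>k. i2 < k \<and> k < l \<longrightarrow> \<not> w i2 > w k" using cij0 by blast
          have "\<forall>k. i2 \<le> k \<and> k < l \<longrightarrow> \<not> w t > w k"
          proof (intro allI impI)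
            fix k assume k: "i2 \<le> k \<and> k < l"
            show "\<not> w t > w k" using hl[rule_format, of k] assms(5) k by (cases "k = i2") auto
          qed
          then have "cij w t l = cij w t i2" using cij_eq[of t i2 l w] assms l by simp
          moreover have "\<not> w t > w l" using nl assms(5) by simp
          ultimately have "mvec n w t x l = x - cij w t i2"
            using mv_coord[of t l n w x] assms l by simp
          then show ?thesis using q px2 nl by simp
        qed
      qed
    qed
  qed
qed

lemma core:
  assumes perm: "w permutes {1..n}"
    and NG: "\<And>i j d a. 1 \<le> i \<Longrightarrow> i < j \<Longrightarrow> j \<le> n \<Longrightarrow> 2 \<le> d \<Longrightarrow> d \<le> cc n w j
       \<Longrightarrow> a \<le> cc n w i \<Longrightarrow> mvec n w j d \<le> mvec n w i a \<Longrightarrow> False"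
    and r: "1 \<le> t" "t \<le> n" "1 \<le> a" "a \<le> cc n w t" "1 \<le> i1" "i1 \<le> n" "1 \<le> x" "x \<le> cc n w i1"
      "1 \<le> i2" "i2 \<le> n" "1 \<le> y" "y \<le> cc n w i2" "1 \<le> s" "s \<le> n" "1 \<le> c" "c \<le> cc n w s"
    and le1: "mvec n w i1 x \<le> mvec n w t a" and le2: "mvec n w i2 y \<le> mvec n w t a"
    and le3: "mvec n w s c \<le> mvec n w i1 x" and le4: "mvec n w s c \<le> mvec n w i2 y"
    and nq: "\<not> mvec n w i2 y \<le> mvec n w i1 x" and ne: "mvec n w s c \<noteq> mvec n w i2 y"
    and i12: "i1 < i2"
  shows False
proof -
  have ti1: "t \<le> i1" using mv_idx[OF le1] r by simp
  have i2s: "i2 \<le> s" using mv_idx[OF le4] r by simp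
  have y1: "y = 1"
  proof (rule ccontr)
    assume "y \<noteq> 1"
    then show False using NG[of t i2 y a] r ti1 i12 le2 by simp
  qed
  have c1: "c = 1"
  proof (rule ccontr)
    assume "c \<noteq> 1"
    then show False using NG[of t s c a] r ti1 i12 i2s le1 le3 order.trans[OF le3 le1] by simp
  qed
  have si2: "i2 < s"
  proof (rule ccontr)
    assume "\<not> i2 < s"
    then have "s = i2" using i2s by simp
    then show False using ne y1 c1 by simp
  qed
  have injw: "inj w" using perm by (rule permutes_inj)
  have wne: "w i1 \<noteq> w i2" using injw i12 by (metis inj_eq less_irrefl)
  show False
  proof (cases "t < i1")
    case True
    have x1: "x = 1"
    proof (rule ccontr)
      assume "x \<noteq> 1"
      then show False using NG[of t i1 x a] r True le1 by simp
    qed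
    have "mvec n w s 1 s \<le> mvec n w i1 1 s" using le3 c1 x1 by (simp add: le_fun_def)
    then have "1 \<le> (if w i1 > w s then 0 else 1 - cij w i1 s)"
      using r i12 si2 mv_i[of s n w 1] mv_coord[of i1 s n w 1] by simp
    then have "cij w i1 s = 0" by (auto split: if_splits)
    then have "\<not> w i1 > w i2" using cij0 i12 si2 by blast
    then have "w i1 < w i2" using wne by simp
    then have "mvec n w i2 1 \<le> mvec n w i1 1"
      using lemL[of i1 i2 s n w 1] r i12 si2 le3 le4 c1 y1 x1 by simp
    then show False using nq x1 y1 by simp
  next
    case False
    then have t: "t = i1" using ti1 by simp
    have "mvec n w i2 1 i2 \<le> mvec n w t a i2" using le2 y1 by (simp add: le_fun_def)
    then have "1 \<le> (if w t > w i2 then 0 else a - cij w t i2)"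
      using r i12 t mv_i[of i2 n w 1] mv_coord[of t i2 n w a] by simp
    then have "\<not> w t > w i2" by (auto split: if_splits)
    then have "w t < w i2" using wne t by simp
    then have "mvec n w i2 1 \<le> mvec n w t x"
      using lemL[of t i2 s n w x] r i12 t si2 le3 le4 c1 y1 by simp
    then show False using nq t y1 by simp
  qed
qed

lemma Mset_elem: "m \<in> Mset n w \<Longrightarrow> \<exists>i x. m = mvec n w i x \<and> 1 \<le> i \<and> i \<le> n \<and> 1 \<le> x \<and> x \<le> cc n w i"
  by (auto simp add: Mset_def)

lemma fwd:
  assumes perm: "w permutes {1..n}" and B: "has_B2_pattern (Mset n w)"
  shows "has_parallelogram_pattern n w"
proof (rule ccontr)
  assume NP: "\<not> has_parallelogram_pattern n w"
  have NG: "\<And>i j d a. 1 \<le> i \<Longrightarrow> i < j \<Longrightarrow> j \<le> n \<Longrightarrow> 2 \<le> d \<Longrightarrow> d \<le> cc n w j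
       \<Longrightarrow> a \<le> cc n w i \<Longrightarrow> mvec n w j d \<le> mvec n w i a \<Longrightarrow> False"
    using key NP by blast
  from B obtain f :: "bool \<times> bool \<Rightarrow> (nat \<Rightarrow> nat)" where
    inj: "inj f" and rg: "range f \<subseteq> Mset n w" and ord: "\<forall>p q. f p \<le> f q \<longleftrightarrow> b2_le p q"
    unfolding has_B2_pattern_def by blast
  obtain t a where T: "f (True, True) = mvec n w t a" "1 \<le> t" "t \<le> n" "1 \<le> a" "a \<le> cc n w t"
    using Mset_elem[of "f (True, True)" n w] rg by blast
  obtain i1 x where P: "f (True, False) = mvec n w i1 x" "1 \<le> i1" "i1 \<le> n" "1 \<le> x" "x \<le> cc n w i1"
    using Mset_elem[of "f (True, False)" n w] rg by blast
  obtain i2 y where Q: "f (False, True) = mvec n w i2 y" "1 \<le> i2" "i2 \<le> n" "1 \<le> y" "y \<le> cc n w i2"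
    using Mset_elem[of "f (False, True)" n w] rg by blast
  obtain s c where S: "f (False, False) = mvec n w s c" "1 \<le> s" "s \<le> n" "1 \<le> c" "c \<le> cc n w s"
    using Mset_elem[of "f (False, False)" n w] rg by blast
  have o1: "mvec n w i1 x \<le> mvec n w t a" using ord T P by (metis b2_le_def fst_conv snd_conv)
  have o2: "mvec n w i2 y \<le> mvec n w t a" using ord T Q by (metis b2_le_def fst_conv snd_conv)
  have o3: "mvec n w s c \<le> mvec n w i1 x" using ord S P by (metis b2_le_def fst_conv snd_conv)
  have o4: "mvec n w s c \<le> mvec n w i2 y" using ord S Q by (metis b2_le_def fst_conv snd_conv)
  have o5: "\<not> mvec n w i2 y \<le> mvec n w i1 x" using ord P Q by (metis b2_le_def fst_conv snd_conv)
  have o6: "\<not> mvec n w i1 x \<le> mvec n w i2 y" using ord P Q by (metis b2_le_def fst_conv snd_conv)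
  have n1: "mvec n w s c \<noteq> mvec n w i2 y" using inj S Q by (metis inj_eq prod.inject)
  have n2: "mvec n w s c \<noteq> mvec n w i1 x" using inj S P by (metis inj_eq prod.inject)
  have "i1 \<noteq> i2"
  proof
    assume "i1 = i2"
    then show False using o5 o6 mv_mono[of x y n w i1] mv_mono[of y x n w i1] by (cases "x \<le> y") auto
  qed
  then consider "i1 < i2" | "i2 < i1" by linarith
  then show False
  proof cases
    case 1
    show False by (rule core[OF perm NG T(2-5) P(2-5) Q(2-5) S(2-5) o1 o2 o3 o4 o5 n1 1])
  next
    case 2
    show False by (rule core[OF perm NG T(2-5) Q(2-5) P(2-5) S(2-5) o2 o1 o4 o3 o6 n2 2])
  qed
qed

lemma bwd:
  assumes "has_parallelogram_pattern n w"
  shows "has_B2_pattern (Mset n w)"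
proof -
  from assms obtain i j a b c d where h: "1 \<le> i" "i < j" "j \<le> n"
      "b \<in> {1..cc n w i}" "a \<in> {1..cc n w i}" "b < a"
      "c \<in> {1..cc n w j}" "d \<in> {1..cc n w j}" "c < d"
      "mvec n w i a > mvec n w j d" "mvec n w i b > mvec n w j c"
      "\<not> mvec n w i b \<le> mvec n w j d" "\<not> mvec n w j d \<le> mvec n w i b"
    unfolding has_parallelogram_pattern_def by blast
  define f where "f = (\<lambda>(u::bool, v::bool). if u then (if v then mvec n w i a else mvec n w i b)
      else (if v then mvec n w j d else mvec n w j c))"
  have f1: "mvec n w i b \<le> mvec n w i a" using h by (simp add: mv_mono)
  have f2: "mvec n w j c \<le> mvec n w j d" using h by (simp add: mv_mono)
  have f3: "mvec n w j c \<le> mvec n w i b" "mvec n w j d \<le> mvec n w i a" using h by (auto simp: less_fun_def)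
  have f4: "mvec n w j c \<le> mvec n w i a" using order.trans[OF f3(1) f1] .
  have g1: "\<not> mvec n w i a \<le> mvec n w i b" using h mv_same[of n w i a b] by auto
  have g2: "\<not> mvec n w j d \<le> mvec n w j c" using h mv_same[of n w j d c] by auto
  have g3: "\<And>e y. 1 \<le> e \<Longrightarrow> \<not> mvec n w i e \<le> mvec n w j y" using h mv_F4 by blast
  have ge: "1 \<le> a" "1 \<le> b" using h by auto
  have ord: "\<forall>p q. f p \<le> f q \<longleftrightarrow> b2_le p q"
  proof (intro allI)
    fix p q :: "bool \<times> bool"
    obtain u1 v1 u2 v2 where pq: "p = (u1, v1)" "q = (u2, v2)" by fastforce
    show "f p \<le> f q \<longleftrightarrow> b2_le p q"
      unfolding pq f_def b2_le_def
      using f1 f2 f3 f4 g1 g2 g3[OF ge(1)] g3[OF ge(2)] h(13)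
      by (cases u1; cases v1; cases u2; cases v2) auto
  qed
  have "inj f"
  proof (rule injI)
    fix p q assume "f p = f q"
    then have "b2_le p q" "b2_le q p" using ord by (metis order_refl)+
    then show "p = q" by (cases p; cases q) (auto simp: b2_le_def)
  qed
  moreover have "range f \<subseteq> Mset n w"
  proof -
    have m: "\<And>k e. 1 \<le> k \<Longrightarrow> k \<le> n \<Longrightarrow> 1 \<le> e \<Longrightarrow> e \<le> cc n w k \<Longrightarrow> mvec n w k e \<in> Mset n w"
      unfolding Mset_def by force
    have "i \<le> n" "1 \<le> j" using h by auto
    then have "mvec n w i a \<in> Mset n w" "mvec n w i b \<in> Mset n w"
      "mvec n w j c \<in> Mset n w" "mvec n w j d \<in> Mset n w"
      using h by (auto intro!: m)
    then show ?thesis by (auto simp add: f_def split: prod.splits)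
  qed
  ultimately show ?thesis unfolding has_B2_pattern_def using ord by blast
qed

theorem mainTheorem7:
  fixes n :: nat and w :: "nat \<Rightarrow> nat"
  assumes "w permutes {1..n}"
  shows "has_B2_pattern (Mset n w) \<longleftrightarrow> has_parallelogram_pattern n w"
  using fwd[OF assms] bwd by blast

end
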